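(* Let $k\ge 1$ and $B=\{p_1,p_1',\dots,p_k,p_k'\}$ be $2k$ distinct vertices. Let $C_B$ be the cycle multi-graph on $B$ with edges $(p_1,p_1'),(p_1',p_2),(p_2,p_2'),\dots,(p_k,p_k'),(p_k',p_1)$, and let $\tilde C_B$ be obtained from $C_B$ by adding a second parallel copy of each edge $(p_i,p_i')$, $i\in[k]$ (so every vertex of $\tilde C_B$ has degree $3$). Let $\tilde E_B$ be a set of $k$ edges with endpoints in $B$ such that every vertex of $B$ is an endpoint of exactly one edge of $\tilde E_B$, and let $H_{(B,\tilde E_B)}$ be the $4$-regular multi-graph obtained from $\tilde C_B$ by adding the edges $\tilde E_B$. Let $G_B$ be the simple graph with vertex set $B$ and edges $\{(p_i,p_i'):i\in[k]\}$. Then for any Eulerian tour $U$ on $H_{(B,\tilde E_B)}$, $\mathcal{A}(U)=G_B$ if and only if $\tilde E_B=\{(p_i,p_i'): i\in[k]\}$.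
   Context: A tour is a closed walk without repeated edges; an Eulerian tour on a connected multi-graph $F$ is a tour using every edge of $F$ exactly once. If $F$ is a connected $4$-regular multi-graph on $n$ vertices and $U=x_1e_1x_2\dots x_{2n}e_{2n}x_1$ is an Eulerian tour, its induced double-occurrence word is $m(U)=x_1x_2\cdots x_{2n}$. The alternance graph $\mathcal{A}(U)$ is the simple graph on $V(F)$ in which $u\neq v$ are adjacent iff $u$ and $v$ alternate in $m(U)$, i.e. $m(U)$ has the form $\dots u\dots v\dots u\dots v\dots$ or $\dots v\dots u\dots v\dots u\dots$. *)

theory Defs
  imports Main "HOL-Library.Multiset"
begin

text \<open>Multigraphs without loops are represented by a multiset of their edges,
each edge being a 2-element set of vertices (parallel edges = multiplicity).\<close>

text \<open>Edge multiset of H_(B,E~): vertices p_i = p i, p_i' = q i for i < k (0-based).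
Each (p_i,p_i') occurs twice, the cycle edges (p_i',p_(i+1 mod k)) once, plus the matching M.\<close>
definition H_edges :: "nat \<Rightarrow> (nat \<Rightarrow> 'a) \<Rightarrow> (nat \<Rightarrow> 'a) \<Rightarrow> 'a set set \<Rightarrow> 'a set multiset" where
  "H_edges k p q M =
     (\<Sum>i<k. {#{p i, q i}, {p i, q i}, {q i, p (Suc i mod k)}#}) + mset_set M"

definition perfect_matching_on :: "'a set \<Rightarrow> 'a set set \<Rightarrow> bool" where
  "perfect_matching_on B M \<longleftrightarrow>
     (\<forall>e\<in>M. \<exists>u v. e = {u, v} \<and> u \<noteq> v \<and> u \<in> B \<and> v \<in> B) \<and>
     (\<forall>v\<in>B. \<exists>!e. e \<in> M \<and> v \<in> e)"

text \<open>The list w = [x_1,...,x_m] is the induced word of an Eulerian tour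
x_1 e_1 x_2 ... x_m e_m x_1 of the multigraph with edge multiset E: the consecutive
(cyclic) pairs of vertices use every edge exactly once.\<close>
definition eulerian_tour_word :: "'a set multiset \<Rightarrow> 'a list \<Rightarrow> bool" where
  "eulerian_tour_word E w \<longleftrightarrow> w \<noteq> [] \<and>
     mset (map (\<lambda>j. {w ! j, w ! (Suc j mod length w)}) [0..<length w]) = E"

definition alternate :: "'a list \<Rightarrow> 'a \<Rightarrow> 'a \<Rightarrow> bool" where
  "alternate w u v \<longleftrightarrow> (\<exists>a b c d. a < b \<and> b < c \<and> c < d \<and> d < length w \<and>
     ((w!a = u \<and> w!b = v \<and> w!c = u \<and> w!d = v) \<or> (w!a = v \<and> w!b = u \<and> w!c = v \<and> w!d = u)))"

definition alternance_edges :: "'a list \<Rightarrow> 'a set set" where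
  "alternance_edges w = {{u, v} | u v. u \<noteq> v \<and> alternate w u v}"

end

theory Submission
  imports Defs
begin

lemma filter_mset_sum_lessThan:
  fixes k :: nat
  shows
  "filter_mset P (\<Sum>i<k. f i) = (\<Sum>i<k. filter_mset P (f i))"
  by (induction k) auto

lemma alt_intro:
  assumes "\<alpha> < \<beta>" "\<beta> < \<gamma>" "\<gamma> < \<delta>" "\<delta> < length w"
    "w!\<alpha> = x" "w!\<gamma> = x" "w!\<beta> = y" "w!\<delta> = y"
  shows "alternate w x y"
  unfolding alternate_def using assms by blast

lemma alt_sym: "alternate w x y = alternate w y x"
  unfolding alternate_def by blast

definition cfg :: "'a list \<Rightarrow> 'a \<Rightarrow> 'a \<Rightarrow> nat \<Rightarrow> nat \<Rightarrow> nat \<Rightarrow> nat \<Rightarrow> bool" where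
  "cfg w u v a b c d \<longleftrightarrow> a < b \<and> b < c \<and> c < d \<and> d < length w \<and> u \<noteq> v \<and>
     {t. t < length w \<and> w!t = u} = {a,c} \<and> {t. t < length w \<and> w!t = v} = {b,d}"

definition three :: "nat \<Rightarrow> nat \<Rightarrow> nat \<Rightarrow> nat \<Rightarrow> nat \<Rightarrow> bool" where
  "three n a b c d \<longleftrightarrow>
    (let E0 = (a = 0 \<and> Suc d = n); E1 = (b = Suc a); E2 = (c = Suc b); E3 = (d = Suc c) in
     (E1 \<and> E2 \<and> E3) \<or> (E0 \<and> E2 \<and> E3) \<or> (E0 \<and> E1 \<and> E3) \<or> (E0 \<and> E1 \<and> E2))"

definition code :: "nat \<Rightarrow> nat \<Rightarrow> nat \<Rightarrow> nat \<Rightarrow> nat \<Rightarrow> bool \<times> bool" where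
  "code a b c d t = (a < t \<and> t < c, b < t \<and> t < d)"

lemma cfg_facts:
  assumes "cfg w u v a b c d"
  shows "a < b" "b < c" "c < d" "d < length w" "u \<noteq> v"
    "w!a = u" "w!c = u" "w!b = v" "w!d = v"
    "\<And>t. t < length w \<Longrightarrow> w!t = u \<longleftrightarrow> t = a \<or> t = c"
    "\<And>t. t < length w \<Longrightarrow> w!t = v \<longleftrightarrow> t = b \<or> t = d"
proof -
  have 1: "{t. t < length w \<and> w!t = u} = {a,c}" and 2: "{t. t < length w \<and> w!t = v} = {b,d}"
    using assms unfolding cfg_def by auto
  show "a < b" "b < c" "c < d" "d < length w" "u \<noteq> v" using assms unfolding cfg_def by auto
  show "w!a = u" "w!c = u" using 1 by blast+
  show "w!b = v" "w!d = v" using 2 by blast+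
  show "\<And>t. t < length w \<Longrightarrow> w!t = u \<longleftrightarrow> t = a \<or> t = c" using 1 by blast
  show "\<And>t. t < length w \<Longrightarrow> w!t = v \<longleftrightarrow> t = b \<or> t = d" using 2 by blast
qed

lemma code_adj:
  assumes "a < b" "b < c" "c < d" "d < n" "t < n"
    "t \<notin> {a,b,c,d}" "Suc t mod n \<notin> {a,b,c,d}"
  shows "code a b c d t = code a b c d (Suc t mod n)"
proof (cases "Suc t < n")
  case True
  then show ?thesis using assms by (auto simp: code_def)
next
  case False
  then have "Suc t = n" using assms by auto
  then show ?thesis using assms by (auto simp: code_def)
qed


lemma code_nonalt:
  assumes c: "cfg w u v a b c d" and "x \<noteq> u" "x \<noteq> v"
    "\<not> alternate w x u" "\<not> alternate w x v"
    "s < length w" "s' < length w" "w!s = x" "w!s' = x"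
  shows "code a b c d s = code a b c d s'"
proof -
  note f = cfg_facts[OF c]
  have nal: "\<not> alternate w u x" "\<not> alternate w v x" using assms alt_sym by metis+
  have gen: "code a b c d s = code a b c d s'" if le: "s < s'" "w!s = x" "w!s' = x" "s' < length w"
    for s s'
  proof -
    have sa: "s \<noteq> a" "s \<noteq> b" "s \<noteq> c" "s \<noteq> d" "s' \<noteq> a" "s' \<noteq> b" "s' \<noteq> c" "s' \<noteq> d"
      using assms(2,3) f(6-9) that by metis+
    have A: "(a < s \<and> s < c) = (a < s' \<and> s' < c)"
    proof (rule ccontr)
      assume "\<not> ?thesis"
      then have "(a < s \<and> s < c \<and> c < s') \<or> (s < a \<and> a < s' \<and> s' < c)"
        using le(1) sa by linarith
      then show False
        using alt_intro[of a s c s' w u x] alt_intro[of s a s' c w x u] f(6,7) le nal assms(4) less_trans[OF f(3) f(4)] by blast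
    qed
    have B: "(b < s \<and> s < d) = (b < s' \<and> s' < d)"
    proof (rule ccontr)
      assume "\<not> ?thesis"
      then have "(b < s \<and> s < d \<and> d < s') \<or> (s < b \<and> b < s' \<and> s' < d)"
        using le(1) sa by linarith
      then show False
        using alt_intro[of b s d s' w v x] alt_intro[of s b s' d w x v] f(8,9) le nal assms(5) f(4) by blast
    qed
    show ?thesis using A B by (simp add: code_def)
  qed
  show ?thesis
  proof (cases s s' rule: linorder_cases)
    case less then show ?thesis using gen assms by blast
  next
    case equal then show ?thesis by simp
  next
    case greater then show ?thesis using gen[of s' s] assms by simp
  qed
qed


lemma codes_nonalt1:
  assumes c: "cfg w u v a b c d"
    and same: "\<And>t t'. t < length w \<Longrightarrow> t' < length w \<Longrightarrow> w!t \<notin> {u,v} \<Longrightarrow> w!t' \<notin> {u,v}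
          \<Longrightarrow> code a b c d t = code a b c d t'"
    and x: "x \<notin> {u,v}"
  shows "\<not> alternate w x u"
proof
  note f = cfg_facts[OF c]
  assume "alternate w x u"
  then obtain \<alpha> \<beta> \<gamma> \<delta> where o: "\<alpha> < \<beta>" "\<beta> < \<gamma>" "\<gamma> < \<delta>" "\<delta> < length w"
    and "(w!\<alpha> = x \<and> w!\<beta> = u \<and> w!\<gamma> = x \<and> w!\<delta> = u) \<or> (w!\<alpha> = u \<and> w!\<beta> = x \<and> w!\<gamma> = u \<and> w!\<delta> = x)"
    unfolding alternate_def by blast
  then consider "w!\<alpha> = x" "w!\<beta> = u" "w!\<gamma> = x" "w!\<delta> = u" | "w!\<alpha> = u" "w!\<beta> = x" "w!\<gamma> = u" "w!\<delta> = x"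
    by blast
  then show False
  proof cases
    case 1
    have "\<beta> < length w" "\<alpha> < length w" "\<gamma> < length w" using o by linarith+
    then have "\<beta> = a \<or> \<beta> = c" "\<delta> = a \<or> \<delta> = c" using f(10) 1 o(4) by auto
    then have "\<beta> = a" "\<delta> = c" using o f(1,2) by linarith+
    then show False using same[of \<alpha> \<gamma>] 1 o x \<open>\<alpha> < length w\<close> \<open>\<gamma> < length w\<close> by (auto simp: code_def)
  next
    case 2
    have "\<beta> < length w" "\<alpha> < length w" "\<gamma> < length w" using o by linarith+
    then have "\<alpha> = a \<or> \<alpha> = c" "\<gamma> = a \<or> \<gamma> = c" using f(10) 2 by auto
    then have "\<alpha> = a" "\<gamma> = c" using o f(1,2) by linarith+
    then show False using same[of \<beta> \<delta>] 2 o x \<open>\<beta> < length w\<close> by (auto simp: code_def)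
  qed
qed

lemma codes_nonalt2:
  assumes c: "cfg w u v a b c d"
    and same: "\<And>t t'. t < length w \<Longrightarrow> t' < length w \<Longrightarrow> w!t \<notin> {u,v} \<Longrightarrow> w!t' \<notin> {u,v}
          \<Longrightarrow> code a b c d t = code a b c d t'"
    and x: "x \<notin> {u,v}"
  shows "\<not> alternate w x v"
proof
  note f = cfg_facts[OF c]
  assume "alternate w x v"
  then obtain \<alpha> \<beta> \<gamma> \<delta> where o: "\<alpha> < \<beta>" "\<beta> < \<gamma>" "\<gamma> < \<delta>" "\<delta> < length w"
    and "(w!\<alpha> = x \<and> w!\<beta> = v \<and> w!\<gamma> = x \<and> w!\<delta> = v) \<or> (w!\<alpha> = v \<and> w!\<beta> = x \<and> w!\<gamma> = v \<and> w!\<delta> = x)"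
    unfolding alternate_def by blast
  then consider "w!\<alpha> = x" "w!\<beta> = v" "w!\<gamma> = x" "w!\<delta> = v" | "w!\<alpha> = v" "w!\<beta> = x" "w!\<gamma> = v" "w!\<delta> = x"
    by blast
  then show False
  proof cases
    case 1
    have "\<beta> < length w" "\<alpha> < length w" "\<gamma> < length w" using o by linarith+
    then have "\<beta> = b \<or> \<beta> = d" "\<delta> = b \<or> \<delta> = d" using f(11) 1 o(4) by auto
    then have "\<beta> = b" "\<delta> = d" using o f(1,2,3) by linarith+
    then show False using same[of \<alpha> \<gamma>] 1 o x \<open>\<alpha> < length w\<close> \<open>\<gamma> < length w\<close> by (auto simp: code_def)
  next
    case 2
    have "\<beta> < length w" "\<alpha> < length w" "\<gamma> < length w" using o by linarith+
    then have "\<alpha> = b \<or> \<alpha> = d" "\<gamma> = b \<or> \<gamma> = d" using f(11) 2 by auto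
    then have "\<alpha> = b" "\<gamma> = d" using o f(1,2,3) by linarith+
    then show False using same[of \<beta> \<delta>] 2 o x \<open>\<beta> < length w\<close> by (auto simp: code_def)
  qed
qed


lemma cfg_notuv:
  assumes c: "cfg w u v a b c d" "t < length w" "t \<notin> {a,b,c,d}"
  shows "w!t \<notin> {u,v}"
  using cfg_facts(10,11)[OF c(1) c(2)] c(3) by auto

lemma cfg_uv:
  assumes c: "cfg w u v a b c d" "t < length w" "w!t \<in> {u,v}"
  shows "t \<in> {a,b,c,d}"
  using cfg_facts(10,11)[OF c(1) c(2)] c(3) by auto

lemma same_code_three:
  assumes c: "cfg w u v a b c d"
    and same: "\<And>t t'. t < length w \<Longrightarrow> t' < length w \<Longrightarrow> w!t \<notin> {u,v} \<Longrightarrow> w!t' \<notin> {u,v}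
          \<Longrightarrow> code a b c d t = code a b c d t'"
  shows "three (length w) a b c d"
proof -
  note f = cfg_facts[OF c]
  define n where "n = length w"
  define C where "C x = (\<exists>t<n. w!t \<notin> {u,v} \<and> code a b c d t = x)" for x
  have ex: "\<not> (C x \<and> C y)" if "x \<noteq> y" for x y
    using same that unfolding C_def n_def by metis
  have w1: "C (True,False)" if "b \<noteq> Suc a"
    unfolding C_def n_def
    by (rule exI[of _ "Suc a"]) (use f that cfg_notuv[OF c, of "Suc a"] in \<open>auto simp: code_def\<close>)
  have w2: "C (True,True)" if "c \<noteq> Suc b"
    unfolding C_def n_def
    by (rule exI[of _ "Suc b"]) (use f that cfg_notuv[OF c, of "Suc b"] in \<open>auto simp: code_def\<close>)
  have w3: "C (False,True)" if "d \<noteq> Suc c"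
    unfolding C_def n_def
    by (rule exI[of _ "Suc c"]) (use f that cfg_notuv[OF c, of "Suc c"] in \<open>auto simp: code_def\<close>)
  have w0: "C (False,False)" if "\<not> (a = 0 \<and> Suc d = n)"
  proof (cases "a = 0")
    case False
    have "w!0 \<notin> {u,v}" by (rule cfg_notuv[OF c]) (use f False in auto)
    then show ?thesis unfolding C_def n_def
      by (intro exI[of _ 0]) (use f(1-4) False in \<open>auto simp: code_def\<close>)
  next
    case True
    then have "Suc d < n" using that f(4) n_def by auto
    then show ?thesis unfolding C_def n_def
      by (intro exI[of _ "Suc d"]) (use f cfg_notuv[OF c, of "Suc d"] in \<open>auto simp: code_def n_def\<close>)
  qed
  have d: "(True,False) \<noteq> (True,True)" "(True,False) \<noteq> (False,True)" "(True,False) \<noteq> (False,False)"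
     "(True,True) \<noteq> (False,True)" "(True,True) \<noteq> (False,False)" "(False,True) \<noteq> (False,False)"
    by auto
  show ?thesis unfolding three_def Let_def n_def[symmetric]
    using w0 w1 w2 w3 ex[OF d(1)] ex[OF d(2)] ex[OF d(3)] ex[OF d(4)] ex[OF d(5)] ex[OF d(6)]
    by blast
qed

lemma three_same_code:
  assumes c: "cfg w u v a b c d" and th: "three (length w) a b c d"
    and t: "t < length w" "t' < length w" "w!t \<notin> {u,v}" "w!t' \<notin> {u,v}"
  shows "code a b c d t = code a b c d t'"
proof -
  note f = cfg_facts[OF c]
  have nt: "t \<notin> {a,b,c,d}" "t' \<notin> {a,b,c,d}" using f(6-9) t by auto
  have key: "\<exists>X. \<forall>s. s < length w \<longrightarrow> s \<notin> {a,b,c,d} \<longrightarrow> code a b c d s = X"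
  proof -
    from th consider "b = Suc a" "c = Suc b" "d = Suc c" | "a = 0" "Suc d = length w" "c = Suc b" "d = Suc c"
      | "a = 0" "Suc d = length w" "b = Suc a" "d = Suc c" | "a = 0" "Suc d = length w" "b = Suc a" "c = Suc b"
      unfolding three_def Let_def by blast
    then show ?thesis
    proof cases
      case 1
      have "code a b c d s = (False,False)" if "s \<notin> {a,b,c,d}" for s
        using that 1 unfolding code_def by (simp; linarith)
      then show ?thesis by blast
    next
      case 2
      have "code a b c d s = (True,False)" if "s < length w" "s \<notin> {a,b,c,d}" for s
        using that 2 f(1-3) unfolding code_def by (simp; linarith)
      then show ?thesis by blast
    next
      case 3
      have "code a b c d s = (True,True)" if "s < length w" "s \<notin> {a,b,c,d}" for s
        using that 3 f(1-3) unfolding code_def by (simp; linarith)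
      then show ?thesis by blast
    next
      case 4
      have "code a b c d s = (False,True)" if "s < length w" "s \<notin> {a,b,c,d}" for s
        using that 4 f(1-3) unfolding code_def by (simp; linarith)
      then show ?thesis by blast
    qed
  qed
  then show ?thesis using nt t by metis
qed

lemma three_T:
  assumes c: "cfg w u v a b c d" and th: "three (length w) a b c d"
  shows "3 \<le> card {t. t < length w \<and> {w!t, w!(Suc t mod length w)} = {u,v}}" (is "_ \<le> card ?T")
proof -
  note f = cfg_facts[OF c]
  have fin: "finite ?T" by simp
  have A: "a \<in> ?T" if "b = Suc a" using that f(1-9) by auto
  have B: "b \<in> ?T" if "c = Suc b" using that f(1-9) by auto
  have C: "c \<in> ?T" if "d = Suc c" using that f(1-9) by auto
  have D: "d \<in> ?T" if "a = 0 \<and> Suc d = length w" using that f(1-9) by auto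
  have c3: "card {x,y,z} = 3" if "x \<noteq> y" "y \<noteq> z" "x \<noteq> z" for x y z :: nat
    using that by auto
  have fin3: "3 \<le> card ?T" if "{x,y,z} \<subseteq> ?T" "x \<noteq> y" "y \<noteq> z" "x \<noteq> z" for x y z
    using card_mono[OF fin that(1)] c3[OF that(2-4)] by simp
  from th consider "b = Suc a" "c = Suc b" "d = Suc c" | "a = 0 \<and> Suc d = length w" "c = Suc b" "d = Suc c"
    | "a = 0 \<and> Suc d = length w" "b = Suc a" "d = Suc c" | "a = 0 \<and> Suc d = length w" "b = Suc a" "c = Suc b"
    unfolding three_def Let_def by blast
  then show ?thesis
  proof cases
    case 1 then show ?thesis using fin3[of a b c] A B C f(1-3) by simp
  next
    case 2 then show ?thesis using fin3[of b c d] D B C f(1-3) by simp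
  next
    case 3 then show ?thesis using fin3[of a c d] A D C f(1-3) by simp
  next
    case 4 then show ?thesis using fin3[of a b d] A B D f(1-3) by simp
  qed
qed

lemma four_sorted:
  fixes P :: "nat set"
  assumes "finite P" "card P = 4"
  obtains x0 x1 x2 x3 where "P = {x0,x1,x2,x3}" "x0 < x1" "x1 < x2" "x2 < x3"
proof -
  define l where "l = sorted_list_of_set P"
  have len: "length l = 4" using assms l_def by simp
  have st: "sorted_wrt (<) l" using l_def by simp
  have sl: "set l = P" using assms l_def by simp
  obtain x0 x1 x2 x3 where "l = [x0,x1,x2,x3]"
    using len by (auto simp: numeral_eq_Suc length_Suc_conv)
  then show ?thesis using that st sl by auto
qed

lemma cfg_exists:
  assumes uv: "u \<noteq> v"
    and cu: "card {t. t < length w \<and> w!t = u} = 2"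
    and cv: "card {t. t < length w \<and> w!t = v} = 2"
    and nl: "\<And>t. t < length w \<Longrightarrow> w!t \<noteq> w!(Suc t mod length w)"
    and cT: "3 \<le> card {t. t < length w \<and> {w!t, w!(Suc t mod length w)} = {u,v}}"
  shows "\<exists>u' v' a b c d. {u',v'} = {u,v} \<and> cfg w u' v' a b c d \<and> three (length w) a b c d"
proof -
  define n where "n = length w"
  define P where "P = {t. t < n \<and> w!t \<in> {u,v}}"
  define T where "T = {t. t < n \<and> {w!t, w!(Suc t mod n)} = {u,v}}"
  have Pu: "P = {t. t < length w \<and> w!t = u} \<union> {t. t < length w \<and> w!t = v}"
    unfolding P_def n_def by auto
  have "card P = 4" unfolding Pu using uv cu cv by (subst card_Un_disjoint) auto
  moreover have "finite P" unfolding P_def by simp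
  ultimately obtain x0 x1 x2 x3 where P: "P = {x0,x1,x2,x3}" and o: "x0 < x1" "x1 < x2" "x2 < x3"
    using four_sorted by blast
  have x3n: "x3 < n" using P P_def by auto
  have inP: "t \<in> P \<longleftrightarrow> t < n \<and> w!t \<in> {u,v}" for t unfolding P_def by simp
  have TP: "T \<subseteq> P" unfolding T_def P_def by auto
  have Tnext: "Suc t mod n \<in> P" if "t \<in> T" for t
  proof -
    have "t < n" using that T_def by auto
    then have "Suc t mod n < n" by simp
    then show ?thesis using that unfolding T_def P_def by auto
  qed
  have Tdiff: "w!t \<noteq> w!(Suc t mod n)" if "t \<in> T" for t
    using nl that unfolding T_def n_def by auto
  have lab: "w!x0 \<in> {u,v}" "w!x1 \<in> {u,v}" "w!x2 \<in> {u,v}" "w!x3 \<in> {u,v}"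
    using P inP by auto
  have step: "Suc t \<in> P" if "t \<in> T" "Suc t < n" for t
    using Tnext[OF that(1)] that(2) by simp
  have E1: "x1 = Suc x0 \<and> w!x0 \<noteq> w!x1" if "x0 \<in> T"
  proof -
    have "Suc x0 < n" using o x3n by linarith
    then have "Suc x0 \<in> {x0,x1,x2,x3}" using step[OF that] P by simp
    then have "Suc x0 = x1" using o by auto
    then show ?thesis using Tdiff[OF that] \<open>Suc x0 < n\<close> by auto
  qed
  have E2: "x2 = Suc x1 \<and> w!x1 \<noteq> w!x2" if "x1 \<in> T"
  proof -
    have "Suc x1 < n" using o x3n by linarith
    then have "Suc x1 \<in> {x0,x1,x2,x3}" using step[OF that] P by simp
    then have "Suc x1 = x2" using o by auto
    then show ?thesis using Tdiff[OF that] \<open>Suc x1 < n\<close> by auto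
  qed
  have E3: "x3 = Suc x2 \<and> w!x2 \<noteq> w!x3" if "x2 \<in> T"
  proof -
    have "Suc x2 < n" using o x3n by linarith
    then have "Suc x2 \<in> {x0,x1,x2,x3}" using step[OF that] P by simp
    then have "Suc x2 = x3" using o by auto
    then show ?thesis using Tdiff[OF that] \<open>Suc x2 < n\<close> by auto
  qed
  have E0: "x0 = 0 \<and> Suc x3 = n \<and> w!x3 \<noteq> w!x0" if "x3 \<in> T"
  proof -
    have sn: "Suc x3 = n"
    proof (rule ccontr)
      assume "Suc x3 \<noteq> n"
      then have "Suc x3 < n" using x3n by simp
      then have "Suc x3 \<in> P" using Tnext[OF that] by simp
      then show False using P o by auto
    qed
    then have "0 \<in> P" using Tnext[OF that] by simp
    then have "x0 = 0" using P o by auto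
    then show ?thesis using sn Tdiff[OF that] by simp
  qed
  have fT: "finite T" unfolding T_def by simp
  have cT': "3 \<le> card T" using cT unfolding T_def n_def .
  have cP: "card P = 4" unfolding Pu using uv cu cv by (subst card_Un_disjoint) auto
  have fP: "finite P" unfolding P_def by simp
  have two_out: False if "x \<notin> T" "y \<notin> T" "x \<noteq> y" "x \<in> P" "y \<in> P" for x y
  proof -
    have "T \<subseteq> P - {x,y}" using TP that by auto
    moreover have "card (P - {x,y}) = 2" using that cP fP by (subst card_Diff_subset) auto
    ultimately have "card T \<le> 2" using card_mono fP by (metis finite_Diff)
    then show False using cT' by simp
  qed
  have Pm: "x0 \<in> P" "x1 \<in> P" "x2 \<in> P" "x3 \<in> P" using P by auto
  have ne: "x0 \<noteq> x1" "x0 \<noteq> x2" "x0 \<noteq> x3" "x1 \<noteq> x2" "x1 \<noteq> x3" "x2 \<noteq> x3" using o by auto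
  have three4: "(x0 \<in> T \<and> x1 \<in> T \<and> x2 \<in> T) \<or> (x3 \<in> T \<and> x1 \<in> T \<and> x2 \<in> T) \<or>
     (x3 \<in> T \<and> x0 \<in> T \<and> x2 \<in> T) \<or> (x3 \<in> T \<and> x0 \<in> T \<and> x1 \<in> T)"
    using two_out[OF _ _ ne(1) Pm(1,2)] two_out[OF _ _ ne(2) Pm(1,3)] two_out[OF _ _ ne(3) Pm(1,4)]
      two_out[OF _ _ ne(4) Pm(2,3)] two_out[OF _ _ ne(5) Pm(2,4)] two_out[OF _ _ ne(6) Pm(3,4)]
    by blast
  have tw: "p1 = p3" if "p1 \<in> {u,v}" "p2 \<in> {u,v}" "p3 \<in> {u,v}" "p1 \<noteq> p2" "p2 \<noteq> p3" for p1 p2 p3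
    using that by auto
  have alt: "w!x0 = w!x2 \<and> w!x1 = w!x3 \<and> w!x0 \<noteq> w!x1"
  proof -
    from three4 consider "x0 \<in> T" "x1 \<in> T" "x2 \<in> T" | "x3 \<in> T" "x1 \<in> T" "x2 \<in> T" |
      "x3 \<in> T" "x0 \<in> T" "x2 \<in> T" | "x3 \<in> T" "x0 \<in> T" "x1 \<in> T" by blast
    then show ?thesis
    proof cases
      case 1
      then have d: "w!x0 \<noteq> w!x1" "w!x1 \<noteq> w!x2" "w!x2 \<noteq> w!x3" using E1 E2 E3 by auto
      show ?thesis using tw[OF lab(1,2,3) d(1,2)] tw[OF lab(2,3,4) d(2,3)] d by simp
    next
      case 2
      then have d: "w!x3 \<noteq> w!x0" "w!x1 \<noteq> w!x2" "w!x2 \<noteq> w!x3" using E0 E2 E3 by auto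
      show ?thesis using tw[OF lab(2,3,4) d(2,3)] tw[OF lab(3,4,1) d(3,1)] d by metis
    next
      case 3
      then have d: "w!x3 \<noteq> w!x0" "w!x0 \<noteq> w!x1" "w!x2 \<noteq> w!x3" using E0 E1 E3 by auto
      show ?thesis using tw[OF lab(3,4,1) d(3,1)] tw[OF lab(4,1,2) d(1,2)] d by metis
    next
      case 4
      then have d: "w!x3 \<noteq> w!x0" "w!x0 \<noteq> w!x1" "w!x1 \<noteq> w!x2" using E0 E1 E2 by auto
      show ?thesis using tw[OF lab(4,1,2) d(1,2)] tw[OF lab(1,2,3) d(2,3)] d by metis
    qed
  qed
  have thr: "three n x0 x1 x2 x3"
  proof -
    from three4 consider "x0 \<in> T" "x1 \<in> T" "x2 \<in> T" | "x3 \<in> T" "x1 \<in> T" "x2 \<in> T" |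
      "x3 \<in> T" "x0 \<in> T" "x2 \<in> T" | "x3 \<in> T" "x0 \<in> T" "x1 \<in> T" by blast
    then show ?thesis
    proof cases
      case 1 then show ?thesis using E1 E2 E3 unfolding three_def Let_def by simp
    next
      case 2 then show ?thesis using E0 E2 E3 unfolding three_def Let_def by simp
    next
      case 3 then show ?thesis using E0 E1 E3 unfolding three_def Let_def by simp
    next
      case 4 then show ?thesis using E0 E1 E2 unfolding three_def Let_def by simp
    qed
  qed
  define u' where "u' = w!x0"
  define v' where "v' = w!x1"
  have u'in: "u' \<in> {u,v}" and v'in: "v' \<in> {u,v}" using lab u'_def v'_def by auto
  have uv'ne: "u' \<noteq> v'" using alt unfolding u'_def v'_def by blast
  have uv': "{u',v'} = {u,v}" using u'in v'in uv'ne by auto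
  have xs: "x0 < length w" "x1 < length w" "x2 < length w" "x3 < length w"
    using o x3n n_def by auto
  have pu: "{t. t < length w \<and> w!t = u'} = {x0,x2}"
  proof (intro set_eqI iffI)
    fix t assume a: "t \<in> {t. t < length w \<and> w!t = u'}"
    then have "t \<in> P" using inP u'in n_def by auto
    then have "t = x0 \<or> t = x1 \<or> t = x2 \<or> t = x3" using P by auto
    moreover have "w!x1 \<noteq> u'" "w!x3 \<noteq> u'" using alt u'_def by auto
    ultimately show "t \<in> {x0,x2}" using a by auto
  next
    fix t assume "t \<in> {x0,x2}"
    then show "t \<in> {t. t < length w \<and> w!t = u'}" using xs alt u'_def by auto
  qed
  have pv: "{t. t < length w \<and> w!t = v'} = {x1,x3}"
  proof (intro set_eqI iffI)
    fix t assume a: "t \<in> {t. t < length w \<and> w!t = v'}"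
    then have "t \<in> P" using inP v'in n_def by auto
    then have "t = x0 \<or> t = x1 \<or> t = x2 \<or> t = x3" using P by auto
    moreover have "w!x0 \<noteq> v'" "w!x2 \<noteq> v'" using alt v'_def by auto
    ultimately show "t \<in> {x1,x3}" using a by auto
  next
    fix t assume "t \<in> {x1,x3}"
    then show "t \<in> {t. t < length w \<and> w!t = v'}" using xs alt v'_def by auto
  qed
  have "cfg w u' v' x0 x1 x2 x3"
    unfolding cfg_def using o xs(4) pu pv uv'ne by blast
  then show ?thesis using uv' thr n_def by blast
qed


lemma chain_const:
  fixes g :: "nat \<Rightarrow> 'b"
  assumes k2: "2 \<le> k" and j: "j < k"
    and st: "\<And>i. i < k \<Longrightarrow> i \<noteq> j \<Longrightarrow> Suc i mod k \<noteq> j \<Longrightarrow> g i = g (Suc i mod k)"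
  shows "\<exists>c. \<forall>i<k. i \<noteq> j \<longrightarrow> g i = c"
proof -
  have up: "Suc j + m < k \<longrightarrow> g (Suc j + m) = g (Suc j)" for m
  proof (induction m)
    case 0 then show ?case by simp
  next
    case (Suc m)
    show ?case
    proof
      assume a: "Suc j + Suc m < k"
      have md: "Suc (Suc j + m) mod k = Suc (Suc j + m)" using a by simp
      have "g (Suc j + m) = g (Suc (Suc j + m) mod k)"
        by (rule st) (use a md in simp_all)
      then show "g (Suc j + Suc m) = g (Suc j)" using Suc a by simp
    qed
  qed
  have down: "m < j \<longrightarrow> g m = g 0" for m
  proof (induction m)
    case 0 then show ?case by simp
  next
    case (Suc m)
    show ?case
    proof
      assume a: "Suc m < j"
      have md: "Suc m mod k = Suc m" using a j by simp
      have "g m = g (Suc m mod k)"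
        by (rule st) (use a j md in simp_all)
      then show "g (Suc m) = g 0" using Suc a j by simp
    qed
  qed
  have upi: "g i = g (Suc j)" if "j < i" "i < k" for i
    using up[of "i - Suc j"] that by simp
  have downi: "g i = g 0" if "i < j" for i
    using down[of i] that by blast
  show ?thesis
  proof (cases "j = 0")
    case True
    have "g i = g (Suc j)" if "i < k" "i \<noteq> j" for i
      using upi[of i] that True by simp
    then show ?thesis by blast
  next
    case False
    show ?thesis
    proof (cases "Suc j = k")
      case True
      have "g i = g 0" if "i < k" "i \<noteq> j" for i
        using downi[of i] that True by simp
      then show ?thesis by blast
    next
      case False2: False
      have km: "k - 1 < k" "k - 1 \<noteq> j" "Suc (k - 1) mod k = 0" using j k2 False2 by auto
      have "g (k - 1) = g 0" using st[OF km(1,2)] km(3) False by simp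
      moreover have "g (k - 1) = g (Suc j)" using upi[of "k - 1"] j False2 by simp
      ultimately have "g i = g 0" if "i < k" "i \<noteq> j" for i
        using upi[of i] downi[of i] that by (cases "i < j") simp_all
      then show ?thesis by blast
    qed
  qed
qed

lemma suc_mod_cases: "t < n \<Longrightarrow> Suc t mod n = (if Suc t = n then 0 else Suc t)"
  by auto

locale S =
  fixes k :: nat and p q :: "nat \<Rightarrow> 'a" and M :: "'a set set" and w :: "'a list"
  assumes k1: "k \<ge> 1"
    and injp: "inj_on p {..<k}" and injq: "inj_on q {..<k}"
    and disj: "p ` {..<k} \<inter> q ` {..<k} = {}"
    and pm: "perfect_matching_on (p ` {..<k} \<union> q ` {..<k}) M"
    and eu: "eulerian_tour_word (H_edges k p q M) w"
begin

abbreviation "B \<equiv> p ` {..<k} \<union> q ` {..<k}"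
abbreviation "n \<equiv> length w"
definition adj :: "nat \<Rightarrow> 'a set" where "adj t = {w!t, w!(Suc t mod n)}"
abbreviation "H \<equiv> H_edges k p q M"

lemma pq_ne: "i < k \<Longrightarrow> j < k \<Longrightarrow> p i \<noteq> q j"
  using disj by auto

lemma p_eq: "i < k \<Longrightarrow> j < k \<Longrightarrow> p i = p j \<longleftrightarrow> i = j"
  using injp by (auto dest: inj_onD)

lemma q_eq: "i < k \<Longrightarrow> j < k \<Longrightarrow> q i = q j \<longleftrightarrow> i = j"
  using injq by (auto dest: inj_onD)

lemma n_pos: "0 < n" and H_word: "H = mset (map adj [0..<n])"
  using eu unfolding eulerian_tour_word_def adj_def by auto

lemma M_edge: "e \<in> M \<Longrightarrow> \<exists>x y. e = {x,y} \<and> x \<noteq> y \<and> x \<in> B \<and> y \<in> B"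
  using pm unfolding perfect_matching_on_def by blast

lemma M_fin: "finite M"
proof -
  have "M \<subseteq> (\<lambda>(x,y). {x,y}) ` (B \<times> B)" using M_edge by fastforce
  then show ?thesis by (rule finite_subset) auto
qed

lemma mod_lt: "Suc i mod k < k" using k1 by simp

lemma H_edge: "e \<in># H \<Longrightarrow> \<exists>x y. e = {x,y} \<and> x \<noteq> y \<and> x \<in> B \<and> y \<in> B"
proof -
  assume "e \<in># H"
  then have "e \<in># (\<Sum>i<k. {#{p i, q i}, {p i, q i}, {q i, p (Suc i mod k)}#}) \<or> e \<in># mset_set M"
    unfolding H_edges_def by simp
  then consider "e \<in> M" | i where "i < k" "e = {p i, q i} \<or> e = {q i, p (Suc i mod k)}"
  proof (elim disjE)
    assume "e \<in># (\<Sum>i<k. {#{p i, q i}, {p i, q i}, {q i, p (Suc i mod k)}#})"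
    then obtain i where "i < k" "e \<in># {#{p i, q i}, {p i, q i}, {q i, p (Suc i mod k)}#}"
      by (auto simp: set_mset_sum)
    then show thesis using that by auto
  next
    assume "e \<in># mset_set M"
    then show thesis using that M_fin by simp
  qed
  then show ?thesis
  proof cases
    case 1 then show ?thesis by (rule M_edge)
  next
    case 2
    then show ?thesis using pq_ne[OF 2(1) 2(1)] pq_ne[OF mod_lt 2(1)] mod_lt by blast
  qed
qed

lemma adj_in: "t < n \<Longrightarrow> adj t \<in># H"
  unfolding H_word by simp

lemma noloop: "t < n \<Longrightarrow> w!t \<noteq> w!(Suc t mod n)"
  and letB: "t < n \<Longrightarrow> w!t \<in> B"
proof -
  assume t: "t < n"
  obtain x y where "adj t = {x,y}" "x \<noteq> y" "x \<in> B" "y \<in> B" using H_edge[OF adj_in[OF t]] by blast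
  then have e: "{w!t, w!(Suc t mod n)} = {x,y}" and xy: "x \<noteq> y" "x \<in> B" "y \<in> B"
    unfolding adj_def by blast+
  show "w!t \<noteq> w!(Suc t mod n)"
  proof
    assume eq: "w!t = w!(Suc t mod n)"
    then have "{x,y} = {w!t}" using e by simp
    then have "x = w!t" "y = w!t" by blast+
    then show False using xy(1) by simp
  qed
  have "w!t \<in> {x,y}" using e by blast
  then show "w!t \<in> B" using xy by blast
qed

lemma edge_pos: "e \<in># H \<Longrightarrow> \<exists>t<n. adj t = e"
  unfolding H_word by auto

lemma count_H: "count H e = card {t. t < n \<and> adj t = e}"
proof -
  have "count H e = length (filter (\<lambda>t. e = adj t) [0..<n])"
    unfolding H_word count_mset count_list_eq_length_filter filter_map length_map o_def by (rule refl)
  also have "\<dots> = card ({t. e = adj t} \<inter> set [0..<n])"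
    by (rule distinct_length_filter) simp
  also have "{t. e = adj t} \<inter> set [0..<n] = {t. t < n \<and> adj t = e}" by auto
  finally show ?thesis .
qed

lemma deg_word: "v \<in> B \<Longrightarrow> size (filter_mset (\<lambda>e. v \<in> e) H) = 2 * card {t. t < n \<and> w!t = v}"
proof -
  assume vB: "v \<in> B"
  define A where "A = {t. t < n \<and> w!t = v}"
  define A' where "A' = {t. t < n \<and> w!(Suc t mod n) = v}"
  have "size (filter_mset (\<lambda>e. v \<in> e) H) = length (filter (\<lambda>t. v \<in> adj t) [0..<n])"
    unfolding H_word mset_filter[symmetric] size_mset filter_map length_map o_def by (rule refl)
  also have "\<dots> = card ({t. v \<in> adj t} \<inter> set [0..<n])"
    by (rule distinct_length_filter) simp
  also have "{t. v \<in> adj t} \<inter> set [0..<n] = A \<union> A'"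
    unfolding A_def A'_def adj_def by auto
  also have "card (A \<union> A') = card A + card A'"
    apply (rule card_Un_disjoint) apply (simp add: A_def) apply (simp add: A'_def)
    using noloop unfolding A_def A'_def by fastforce
  also have "card A' = card A"
  proof -
    have inj: "inj_on (\<lambda>t. Suc t mod n) A'"
    proof (rule inj_onI)
      fix x y assume "x \<in> A'" "y \<in> A'" "Suc x mod n = Suc y mod n"
      then have "x < n" "y < n" unfolding A'_def by auto
      then show "x = y" using \<open>Suc x mod n = Suc y mod n\<close> suc_mod_cases[of x n] suc_mod_cases[of y n]
        by (simp split: if_splits)
    qed
    have im: "(\<lambda>t. Suc t mod n) ` A' = A"
    proof (intro set_eqI iffI)
      fix s assume "s \<in> (\<lambda>t. Suc t mod n) ` A'"
      then show "s \<in> A" unfolding A_def A'_def using n_pos by auto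
    next
      fix s assume s: "s \<in> A"
      show "s \<in> (\<lambda>t. Suc t mod n) ` A'"
      proof (cases s)
        case 0
        then have "Suc (n - 1) mod n = s" using n_pos by simp
        moreover have "n - 1 \<in> A'" using s 0 n_pos unfolding A_def A'_def by simp
        ultimately show ?thesis by force
      next
        case (Suc s')
        then have "Suc s' mod n = s" using s unfolding A_def by simp
        moreover have "s' \<in> A'" using s Suc unfolding A_def A'_def by simp
        ultimately show ?thesis by force
      qed
    qed
    show ?thesis using card_image[OF inj] im by simp
  qed
  finally show ?thesis unfolding A_def by simp
qed


lemma pred_mod: "i < k \<Longrightarrow> j < k \<Longrightarrow> Suc i mod k = j \<longleftrightarrow> i = (if j = 0 then k - 1 else j - 1)"
  using suc_mod_cases[of i k] by (auto split: if_splits)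

lemma M_deg: "v \<in> B \<Longrightarrow> card {e \<in> M. v \<in> e} = 1"
proof -
  assume "v \<in> B"
  then obtain e0 where "e0 \<in> M \<and> v \<in> e0" "\<And>e. e \<in> M \<and> v \<in> e \<Longrightarrow> e = e0"
    using pm unfolding perfect_matching_on_def by metis
  then have "{e \<in> M. v \<in> e} = {e0}" by blast
  then show ?thesis by simp
qed

lemma size_filter3: "size (filter_mset P {#a, b, c#}) = (if P a then 1 else 0) + (if P b then 1 else 0) + (if P c then 1 else 0)"
  by simp

lemma deg_H: "v \<in> B \<Longrightarrow> size (filter_mset (\<lambda>e. v \<in> e) H) = 4"
proof -
  assume vB: "v \<in> B"
  define F where "F i = {#{p i, q i}, {p i, q i}, {q i, p (Suc i mod k)}#}" for i
  have "size (filter_mset (\<lambda>e. v \<in> e) H) = (\<Sum>i<k. size (filter_mset (\<lambda>e. v \<in> e) (F i))) + card {e \<in> M. v \<in> e}"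
    unfolding H_edges_def F_def filter_union_mset size_union filter_mset_sum_lessThan size_multiset_sum
      filter_mset_mset_set[OF M_fin] size_mset_set by simp
  also have "card {e \<in> M. v \<in> e} = 1" using M_deg[OF vB] .
  also have "(\<Sum>i<k. size (filter_mset (\<lambda>e. v \<in> e) (F i))) = 3"
  proof -
    from vB obtain j where j: "j < k" "v = p j \<or> v = q j" by blast
    then show ?thesis
    proof (elim disjE)
      assume v: "v = p j"
      define i0 where "i0 = (if j = 0 then k - 1 else j - 1)"
      have i0k: "i0 < k" using j k1 unfolding i0_def by auto
      have "(\<Sum>i<k. size (filter_mset (\<lambda>e. v \<in> e) (F i))) =
            (\<Sum>i<k. (if i = j then 2 else 0) + (if i = i0 then 1 else 0))"
      proof (rule sum.cong[OF refl])
        fix i assume "i \<in> {..<k}"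
        then have i: "i < k" by simp
        have a: "v \<in> {p i, q i} \<longleftrightarrow> i = j" unfolding v insert_iff empty_iff using p_eq[OF i j(1)] pq_ne[OF j(1) i] by metis
        have b: "v \<in> {q i, p (Suc i mod k)} \<longleftrightarrow> i = i0"
          unfolding v insert_iff empty_iff using p_eq[OF mod_lt j(1), of i] pq_ne[OF j(1) i] pred_mod[OF i j(1)] i0_def by metis
        show "size (filter_mset (\<lambda>e. v \<in> e) (F i)) = (if i = j then 2 else 0) + (if i = i0 then 1 else 0)"
          unfolding F_def size_filter3 using a b by simp
      qed
      also have "\<dots> = (\<Sum>i<k. (if i = j then 2 else 0)) + (\<Sum>i<k. (if i = i0 then 1 else 0))"
        by (rule sum.distrib)
      also have "\<dots> = 3" using j(1) i0k by simp
      finally show ?thesis .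
    next
      assume v: "v = q j"
      have "(\<Sum>i<k. size (filter_mset (\<lambda>e. v \<in> e) (F i))) = (\<Sum>i<k. (if i = j then 3 else 0))"
      proof (rule sum.cong[OF refl])
        fix i assume "i \<in> {..<k}"
        then have i: "i < k" by simp
        have a: "v \<in> {p i, q i} \<longleftrightarrow> i = j" unfolding v insert_iff empty_iff using q_eq[OF i j(1)] pq_ne[OF i j(1)] by metis
        have b: "v \<in> {q i, p (Suc i mod k)} \<longleftrightarrow> i = j"
          unfolding v insert_iff empty_iff using q_eq[OF i j(1)] pq_ne[OF mod_lt j(1), of i] by metis
        show "size (filter_mset (\<lambda>e. v \<in> e) (F i)) = (if i = j then 3 else 0)"
          unfolding F_def size_filter3 using a b by simp
      qed
      also have "\<dots> = 3" using j(1) by simp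
      finally show ?thesis .
    qed
  qed
  finally show ?thesis by simp
qed

lemma pos2: "v \<in> B \<Longrightarrow> card {t. t < n \<and> w!t = v} = 2"
proof -
  assume vB: "v \<in> B"
  have "2 * card {t. t < n \<and> w!t = v} = 4" using deg_H[OF vB] deg_word[OF vB] by simp
  then show ?thesis by simp
qed


lemma pair_eq: "i < k \<Longrightarrow> j < k \<Longrightarrow> {p i, q i} = {p j, q j} \<longleftrightarrow> i = j"
  unfolding doubleton_eq_iff using p_eq pq_ne by metis

lemma memb_same: "i < k \<Longrightarrow> j < k \<Longrightarrow> y \<in> {p i, q i} \<Longrightarrow> y \<in> {p j, q j} \<Longrightarrow> i = j"
  unfolding insert_iff empty_iff using p_eq q_eq pq_ne by metis

lemma cyc_ne: "2 \<le> k \<Longrightarrow> i < k \<Longrightarrow> j < k \<Longrightarrow> {q i, p (Suc i mod k)} \<noteq> {p j, q j}"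
proof
  assume k2: "2 \<le> k" and i: "i < k" and j: "j < k" and e: "{q i, p (Suc i mod k)} = {p j, q j}"
  have "q i \<noteq> p j" using pq_ne[OF j i] by simp
  then have "q i = q j" "p (Suc i mod k) = p j" using e unfolding doubleton_eq_iff by auto
  then have "i = j" "Suc i mod k = j" using q_eq[OF i j] p_eq[OF mod_lt j] by auto
  then show False using k2 suc_mod_cases[OF i] by (auto split: if_splits)
qed

lemma countF: "count {#a, b, c#} e = (if a = e then 1 else 0) + (if b = e then 1 else 0) + (if c = e then 1 else 0)"
  by simp

lemma count_H_split: "count H e = (\<Sum>i<k. count {#{p i, q i}, {p i, q i}, {q i, p (Suc i mod k)}#} e) + count (mset_set M) e"
  unfolding H_edges_def count_union count_sum by (rule refl)

lemma M_to_T: "j < k \<Longrightarrow> {p j, q j} \<in> M \<Longrightarrow> 3 \<le> card {t. t < n \<and> adj t = {p j, q j}}"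
proof -
  assume j: "j < k" and e: "{p j, q j} \<in> M"
  have "2 \<le> count {#{p j, q j}, {p j, q j}, {q j, p (Suc j mod k)}#} {p j, q j}"
    unfolding countF by simp
  also have "\<dots> \<le> (\<Sum>i<k. count {#{p i, q i}, {p i, q i}, {q i, p (Suc i mod k)}#} {p j, q j})"
    by (rule member_le_sum) (use j in auto)
  finally have "3 \<le> count H {p j, q j}"
    unfolding count_H_split using count_mset_set(1)[OF M_fin e] by simp
  then show ?thesis unfolding count_H .
qed

lemma T_to_M: "2 \<le> k \<Longrightarrow> j < k \<Longrightarrow> 3 \<le> card {t. t < n \<and> adj t = {p j, q j}} \<Longrightarrow> {p j, q j} \<in> M"
proof (rule ccontr)
  assume k2: "2 \<le> k" and j: "j < k" and c: "3 \<le> card {t. t < n \<and> adj t = {p j, q j}}"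
    and e: "{p j, q j} \<notin> M"
  have "(\<Sum>i<k. count {#{p i, q i}, {p i, q i}, {q i, p (Suc i mod k)}#} {p j, q j}) =
        (\<Sum>i<k. if i = j then 2 else 0)"
  proof (rule sum.cong[OF refl])
    fix i assume "i \<in> {..<k}"
    then have i: "i < k" by simp
    show "count {#{p i, q i}, {p i, q i}, {q i, p (Suc i mod k)}#} {p j, q j} = (if i = j then 2 else 0)"
      unfolding countF using pair_eq[OF i j] cyc_ne[OF k2 i j] by simp
  qed
  also have "\<dots> = 2" using j by simp
  finally have "count H {p j, q j} = 2"
    unfolding count_H_split using count_mset_set(3)[OF e] by simp
  then show False using c unfolding count_H by simp
qed


lemma pm_unique: "v \<in> B \<Longrightarrow> \<exists>!e. e \<in> M \<and> v \<in> e"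
proof -
  assume v: "v \<in> B"
  have "\<forall>v\<in>B. \<exists>!e. e \<in> M \<and> v \<in> e" using pm unfolding perfect_matching_on_def by (rule conjunct2)
  then show "\<exists>!e. e \<in> M \<and> v \<in> e" using v by (rule bspec)
qed

lemma letter_cases: "t < n \<Longrightarrow> \<exists>i<k. w!t = p i \<or> w!t = q i"
  using letB by blast

lemma alt_pos: "alternate w x y \<Longrightarrow> \<exists>t<n. w!t = x"
  unfolding alternate_def by (metis less_trans)

lemma T_eq: "{t. t < length w \<and> {w!t, w!(Suc t mod length w)} = {u,v}} = {t. t < n \<and> adj t = {u,v}}"
  unfolding adj_def by simp

lemma edges_in_H: "i < k \<Longrightarrow> {p i, q i} \<in># H \<and> {q i, p (Suc i mod k)} \<in># H"
proof -
  assume i: "i < k"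
  have "{p i, q i} \<in># {#{p i, q i}, {p i, q i}, {q i, p (Suc i mod k)}#}"
    "{q i, p (Suc i mod k)} \<in># {#{p i, q i}, {p i, q i}, {q i, p (Suc i mod k)}#}" by simp_all
  then have "{p i, q i} \<in># (\<Sum>i<k. {#{p i, q i}, {p i, q i}, {q i, p (Suc i mod k)}#}) \<and>
      {q i, p (Suc i mod k)} \<in># (\<Sum>i<k. {#{p i, q i}, {p i, q i}, {q i, p (Suc i mod k)}#})"
    using i by (auto simp: set_mset_sum)
  then show "{p i, q i} \<in># H \<and> {q i, p (Suc i mod k)} \<in># H" unfolding H_edges_def by simp
qed

lemma good_block:
  assumes j: "j < k" and cT: "3 \<le> card {t. t < n \<and> adj t = {p j, q j}}"
  shows "alternate w (p j) (q j) \<and> (\<forall>x. x \<notin> {p j, q j} \<longrightarrow> \<not> alternate w x (p j) \<and> \<not> alternate w x (q j))"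
proof -
  have pB: "p j \<in> B" and qB: "q j \<in> B" using j by auto
  obtain u' v' a b c d where uv: "{u',v'} = {p j, q j}" and cf: "cfg w u' v' a b c d"
    and th: "three (length w) a b c d"
    using cfg_exists[of "p j" "q j" w, OF pq_ne[OF j j] pos2[OF pB] pos2[OF qB] noloop]
      cT unfolding T_eq by blast
  note f = cfg_facts[OF cf]
  have al: "alternate w u' v'" using alt_intro[OF f(1,2,3,4,6,7,8,9)] .
  have na: "\<not> alternate w x u' \<and> \<not> alternate w x v'" if "x \<notin> {u',v'}" for x
    using codes_nonalt1[OF cf three_same_code[OF cf th] that] codes_nonalt2[OF cf three_same_code[OF cf th] that]
    by blast
  have o: "(u' = p j \<and> v' = q j) \<or> (u' = q j \<and> v' = p j)" using uv unfolding doubleton_eq_iff by blast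
  have A: "alternate w (p j) (q j)" using al o alt_sym by metis
  have Bx: "\<forall>x. x \<notin> {p j, q j} \<longrightarrow> \<not> alternate w x (p j) \<and> \<not> alternate w x (q j)"
  proof (intro allI impI)
    fix x assume "x \<notin> {p j, q j}"
    then have "x \<notin> {u',v'}" using uv by simp
    then show "\<not> alternate w x (p j) \<and> \<not> alternate w x (q j)" using na o by metis
  qed
  show ?thesis using A Bx by blast
qed

lemma block_from_alt:
  assumes AE: "alternance_edges w = {{p i, q i} | i. i < k}" and k2: "2 \<le> k" and j: "j < k"
  shows "{p j, q j} \<in> M"
proof -
  have "{p j, q j} \<in> alternance_edges w" using AE j by blast
  then obtain u v where uv: "{p j, q j} = {u,v}" "u \<noteq> v" "alternate w u v"
    unfolding alternance_edges_def by blast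
  then obtain \<alpha> \<beta> \<gamma> \<delta> where o: "\<alpha> < \<beta>" "\<beta> < \<gamma>" "\<gamma> < \<delta>" "\<delta> < n"
    and pat: "(w!\<alpha> = u \<and> w!\<beta> = v \<and> w!\<gamma> = u \<and> w!\<delta> = v) \<or> (w!\<alpha> = v \<and> w!\<beta> = u \<and> w!\<gamma> = v \<and> w!\<delta> = u)"
    unfolding alternate_def by blast
  define u1 where "u1 = w!\<alpha>"
  define v1 where "v1 = w!\<beta>"
  have uv1: "{u1,v1} = {p j, q j}" using pat uv(1) u1_def v1_def by auto
  have ne1: "u1 \<noteq> v1" using pat uv(2) u1_def v1_def by auto
  have g1: "w!\<gamma> = u1" "w!\<delta> = v1" using pat uv(2) u1_def v1_def by auto
  have u1B: "u1 \<in> B" and v1B: "v1 \<in> B" using uv1 j by auto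
  have lt: "\<alpha> < n" "\<beta> < n" "\<gamma> < n" using o by linarith+
  have pu: "{t. t < n \<and> w!t = u1} = {\<alpha>,\<gamma>}"
  proof (rule sym, rule card_subset_eq)
    show "finite {t. t < n \<and> w!t = u1}" by simp
    show "{\<alpha>,\<gamma>} \<subseteq> {t. t < n \<and> w!t = u1}" using lt g1 u1_def by auto
    show "card {\<alpha>,\<gamma>} = card {t. t < n \<and> w!t = u1}" using pos2[OF u1B] o by simp
  qed
  have pv: "{t. t < n \<and> w!t = v1} = {\<beta>,\<delta>}"
  proof (rule sym, rule card_subset_eq)
    show "finite {t. t < n \<and> w!t = v1}" by simp
    show "{\<beta>,\<delta>} \<subseteq> {t. t < n \<and> w!t = v1}" using lt o g1 v1_def by auto
    show "card {\<beta>,\<delta>} = card {t. t < n \<and> w!t = v1}" using pos2[OF v1B] o by simp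
  qed
  have cf: "cfg w u1 v1 \<alpha> \<beta> \<gamma> \<delta>" unfolding cfg_def using o pu pv ne1 by blast
  note f = cfg_facts[OF cf]
  have nal: "\<not> alternate w x y" if "x \<notin> {u1,v1}" "y \<in> {u1,v1}" for x y
  proof
    assume a: "alternate w x y"
    have "x \<noteq> y" using that by auto
    then have "{x,y} \<in> alternance_edges w" using a unfolding alternance_edges_def by blast
    then have "{x,y} \<in> {{p i, q i} | i. i < k}" unfolding AE .
    then obtain i where i: "i < k" "{x,y} = {p i, q i}" by blast
    have "y \<in> {p i, q i}" "y \<in> {p j, q j}" using i(2) that(2) uv1 by auto
    then have "i = j" using memb_same[OF i(1) j] by blast
    then have "x \<in> {u1,v1}" using i(2) uv1 by auto
    then show False using that(1) by simp
  qed
  define cd where "cd x = code \<alpha> \<beta> \<gamma> \<delta> (SOME s. s < n \<and> w!s = x)" for x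
  have cdx: "code \<alpha> \<beta> \<gamma> \<delta> s = cd x" if "x \<in> B" "x \<notin> {u1,v1}" "s < n" "w!s = x" for x s
  proof -
    have "\<exists>s. s < n \<and> w!s = x" using that by blast
    then have sm: "(SOME s. s < n \<and> w!s = x) < n \<and> w!(SOME s. s < n \<and> w!s = x) = x" by (rule someI_ex)
    have n1: "\<not> alternate w x u1" "\<not> alternate w x v1" using nal[OF that(2)] by simp_all
    have xu: "x \<noteq> u1" "x \<noteq> v1" using that(2) by simp_all
    show ?thesis unfolding cd_def
      by (rule code_nonalt[OF cf xu n1 that(3) conjunct1[OF sm] that(4) conjunct2[OF sm]])
  qed
  have notP: "t \<notin> {\<alpha>,\<beta>,\<gamma>,\<delta>}" if "t < n" "w!t \<notin> {u1,v1}" for t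
    using that f(6-9) by auto
  have cd_edge: "cd x = cd y" if h: "{x,y} \<in># H" "x \<in> B" "y \<in> B" "x \<notin> {u1,v1}" "y \<notin> {u1,v1}" for x y
  proof -
    obtain t where t: "t < n" "adj t = {x,y}" using edge_pos[OF h(1)] by blast
    have s: "Suc t mod n < n" using n_pos by simp
    have e: "{w!t, w!(Suc t mod n)} = {x,y}" using t(2) adj_def by simp
    have l: "w!t \<notin> {u1,v1}" "w!(Suc t mod n) \<notin> {u1,v1}" "w!t \<in> B" "w!(Suc t mod n) \<in> B"
      using e h(2-5) by (auto simp: doubleton_eq_iff)
    have "code \<alpha> \<beta> \<gamma> \<delta> t = code \<alpha> \<beta> \<gamma> \<delta> (Suc t mod n)"
      by (rule code_adj) (use o t(1) notP[OF t(1) l(1)] notP[OF s l(2)] in auto)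
    moreover have "code \<alpha> \<beta> \<gamma> \<delta> t = cd (w!t)" by (rule cdx) (use l t in auto)
    moreover have "code \<alpha> \<beta> \<gamma> \<delta> (Suc t mod n) = cd (w!(Suc t mod n))" by (rule cdx) (use l s in auto)
    ultimately have "cd (w!t) = cd (w!(Suc t mod n))" by simp
    then show ?thesis using e by (auto simp: doubleton_eq_iff)
  qed
  have notuv: "p i \<notin> {u1,v1}" "q i \<notin> {u1,v1}" if "i < k" "i \<noteq> j" for i
    using uv1 p_eq[OF that(1) j] q_eq[OF that(1) j] pq_ne[OF that(1) j] pq_ne[OF j that(1)] that(2)
    by auto
  define g where "g i = cd (p i)" for i
  have gq: "cd (q i) = g i" if "i < k" "i \<noteq> j" for i
    using cd_edge[of "p i" "q i"] edges_in_H[OF that(1)] notuv[OF that] that(1) unfolding g_def by auto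
  have st: "g i = g (Suc i mod k)" if "i < k" "i \<noteq> j" "Suc i mod k \<noteq> j" for i
  proof -
    have "cd (q i) = cd (p (Suc i mod k))"
      using cd_edge[of "q i" "p (Suc i mod k)"] edges_in_H[OF that(1)] notuv[OF that(1,2)]
        notuv[OF mod_lt that(3)] that(1) mod_lt by auto
    then show ?thesis using gq[OF that(1,2)] unfolding g_def by simp
  qed
  obtain c0 where c0: "\<And>i. i < k \<Longrightarrow> i \<noteq> j \<Longrightarrow> g i = c0"
    using chain_const[OF k2 j, of g] st by blast
  have codec: "code \<alpha> \<beta> \<gamma> \<delta> t = c0" if h: "t < n" "w!t \<notin> {u1,v1}" for t
  proof -
    obtain i where i: "i < k" "w!t = p i \<or> w!t = q i" using letter_cases[OF h(1)] by blast
    have ij: "i \<noteq> j" using i(2) h(2) uv1 by auto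
    have "code \<alpha> \<beta> \<gamma> \<delta> t = cd (w!t)" by (rule cdx) (use h letB in auto)
    then show ?thesis using i(2) gq[OF i(1) ij] c0[OF i(1) ij] unfolding g_def by auto
  qed
  have th: "three (length w) \<alpha> \<beta> \<gamma> \<delta>"
    by (rule same_code_three[OF cf]) (use codec in simp)
  have "3 \<le> card {t. t < n \<and> adj t = {p j, q j}}"
    using three_T[OF cf th] unfolding T_eq uv1 .
  then show ?thesis by (rule T_to_M[OF k2 j])
qed

lemma main: "alternance_edges w = {{p i, q i} | i. i < k} \<longleftrightarrow> M = {{p i, q i} | i. i < k}"
proof
  assume AE: "alternance_edges w = {{p i, q i} | i. i < k}"
  have inM: "{p j, q j} \<in> M" if j: "j < k" for j
  proof (cases "2 \<le> k")
    case True
    then show ?thesis using block_from_alt[OF AE True j] by simp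
  next
    case False
    then have k: "k = 1" using k1 by simp
    then have j0: "j = 0" using j by simp
    have "p 0 \<in> B" using k by simp
    then obtain e where e: "e \<in> M" "p 0 \<in> e" using pm_unique by blast
    obtain x y where xy: "e = {x,y}" "x \<noteq> y" "x \<in> B" "y \<in> B"
      using M_edge[OF e(1)] by (elim exE conjE) (rule that)
    have "B = {p 0, q 0}" using k by (simp add: lessThan_Suc insert_commute)
    then have "x \<in> {p 0, q 0}" "y \<in> {p 0, q 0}" using xy by blast+
    then have "e = {p 0, q 0}" using xy(1,2) e(2) by blast
    then show ?thesis using e j0 by simp
  qed
  show "M = {{p i, q i} | i. i < k}"
  proof (intro set_eqI iffI)
    fix e assume e: "e \<in> M"
    obtain x y where xy: "e = {x,y}" "x \<noteq> y" "x \<in> B" "y \<in> B"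
      using M_edge[OF e] by (elim exE conjE) (rule that)
    have xB: "x \<in> B" using xy by simp
    obtain i where i: "i < k" "x = p i \<or> x = q i" using xB by blast
    obtain e0 where e0: "e0 \<in> M \<and> x \<in> e0" "\<And>e'. e' \<in> M \<and> x \<in> e' \<Longrightarrow> e' = e0"
      using pm_unique[OF xB] by (elim ex1E) blast
    have "{p i, q i} \<in> M \<and> x \<in> {p i, q i}" using inM[OF i(1)] i(2) by auto
    then have "{p i, q i} = e0" by (rule e0(2))
    moreover have "e = e0" using e xy by (intro e0(2)) simp
    ultimately have "e = {p i, q i}" by simp
    then show "e \<in> {{p i, q i} | i. i < k}" using i(1) by blast
  next
    fix e assume "e \<in> {{p i, q i} | i. i < k}"
    then obtain j where j: "j < k" "e = {p j, q j}" by blast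
    then show "e \<in> M" using inM[OF j(1)] by simp
  qed
next
  assume MP: "M = {{p i, q i} | i. i < k}"
  have gb: "alternate w (p j) (q j) \<and> (\<forall>x. x \<notin> {p j, q j} \<longrightarrow> \<not> alternate w x (p j) \<and> \<not> alternate w x (q j))"
    if j: "j < k" for j
  proof -
    have "{p j, q j} \<in> M" using MP j by blast
    then show ?thesis by (rule good_block[OF j M_to_T[OF j]])
  qed
  show "alternance_edges w = {{p i, q i} | i. i < k}"
  proof (intro set_eqI iffI)
    fix e assume "e \<in> alternance_edges w"
    then obtain x y where xy: "e = {x,y}" "x \<noteq> y" "alternate w x y"
      unfolding alternance_edges_def by blast
    obtain t where t: "t < n" "w!t = x" using alt_pos[OF xy(3)] by blast
    obtain j where j: "j < k" "x = p j \<or> x = q j" using letter_cases[OF t(1)] t(2) by blast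
    have ayx: "alternate w y x" using xy(3) alt_sym by metis
    have "y \<in> {p j, q j}"
    proof (rule ccontr)
      assume "y \<notin> {p j, q j}"
      then show False using gb[OF j(1)] ayx j(2) by blast
    qed
    then have "e = {p j, q j}" using xy j(2) by auto
    then show "e \<in> {{p i, q i} | i. i < k}" using j(1) by blast
  next
    fix e assume "e \<in> {{p i, q i} | i. i < k}"
    then obtain j where j: "j < k" "e = {p j, q j}" by blast
    have "alternate w (p j) (q j)" using gb[OF j(1)] by blast
    moreover have "p j \<noteq> q j" using pq_ne[OF j(1) j(1)] .
    ultimately show "e \<in> alternance_edges w" unfolding alternance_edges_def j(2) by blast
  qed
qed

end

theorem mainTheorem2:
  fixes k :: nat and p q :: "nat \<Rightarrow> 'a" and M :: "'a set set" and w :: "'a list"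
  assumes "k \<ge> 1"
    and "inj_on p {..<k}" and "inj_on q {..<k}"
    and "p ` {..<k} \<inter> q ` {..<k} = {}"
    and "perfect_matching_on (p ` {..<k} \<union> q ` {..<k}) M"
    and "eulerian_tour_word (H_edges k p q M) w"
  shows "alternance_edges w = {{p i, q i} | i. i < k} \<longleftrightarrow> M = {{p i, q i} | i. i < k}"
proof -
  interpret S k p q M w using assms by unfold_locales
  show ?thesis by (rule main)
qed

end
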